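(* Let $L>0$ and $c_0>0$. Assume: [A1] there exist constants $C_L>0$ and $\varepsilon_L\in(0,1)$ such that $P\bigl[\sup_{u\in V_T(r)}\mathbb Z_T(u)\ge \exp(-r^{2-\varepsilon_L})\bigr]\le C_L/r^L$ for all $r>0$ and all $T\in\mathbb T$; [A2] $p$ is differentiable on $\mathbb R\setminus\{0\}$; [A3] there is $\varepsilon>0$ with $\sup_{-\varepsilon<x<\varepsilon}p(x)<\infty$; [A4] for every $j\in\mathcal J^{(1)}$, $\sup_{T\in\mathbb T}|\alpha_T^j\xi_T^j|\le c_0$ almost surely. Then there exist constants $C'_L>0$ and $\varepsilon'_L\in(0,1)$ such that $$P\Bigl[\sup_{u\in V_T(r)}\mathbb Z^\dagger_T(u)\ge \exp(-r^{2-\varepsilon'_L})\Bigr]\le \frac{C'_L}{r^L}$$ for all $r>0$ and all $T\in\mathbb T$.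
   Context: Let $\Theta\subset\mathbb R^{\mathsf p}$ be a bounded open set with closure $\overline\Theta$ and let $\theta^*\in\Theta$. Let $(\Omega,\mathcal F,P)$ be a probability space and $\mathbb T\subset\mathbb R_{\ge0}$ with $\sup\mathbb T=\infty$. For each $T\in\mathbb T$, $\mathbb H_T:\Omega\times\overline\Theta\to\mathbb R$ is a random field such that $\theta\mapsto\mathbb H_T(\theta)$ is continuous for every $\omega$. The penalty is $p_T(\theta)=\sum_{j=1}^{\mathsf p}\xi_T^j p(\theta_j)$ where $\xi_T^j>0$ are (possibly random) positive quantities and $p:\mathbb R\to\mathbb R_{\ge0}$ satisfies $p(0)=0$; put $\mathbb H^\dagger_T=\mathbb H_T-p_T$. Let $\mathcal J^{(0)}=\{j:\theta^*_j=0\}$, $\mathcal J^{(1)}=\{j:\theta^*_j\neq0\}$. Let $a_T=\mathrm{diag}(\alpha_T^1,\dots,\alpha_T^{\mathsf p})$ be a deterministic invertible diagonal matrix with $\|a_T\|\to0$ as $T\to\infty$, where $\|A\|$ is the square root of the largest eigenvalue of $A'A$. Let $\mathbb U_T=\{u\in\mathbb R^{\mathsf p}:\theta^*+a_Tu\in\overline\Theta\}$, $\mathbb Z_T(u)=\exp(\mathbb H_T(\theta^*+a_Tu)-\mathbb H_T(\theta^* ))$ and $\mathbb Z^\dagger_T(u)=\exp(\mathbb H^\dagger_T(\theta^*+a_Tu)-\mathbb H^\dagger_T(\theta^* ))$ for $u\in\mathbb U_T$, and $V_T(r)=\{u\in\mathbb U_T:|u|\ge r\}$. The supremum over the empty set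 is $-\infty$ by convention. *)

theory Defs
  imports "HOL-Probability.Probability"
begin

definition outer_prob :: "'w measure \<Rightarrow> 'w set \<Rightarrow> real" where
  "outer_prob M A = Inf {measure M B | B. B \<in> sets M \<and> A \<subseteq> B}"

definition diag_scale :: "('p::finite \<Rightarrow> real) \<Rightarrow> real^'p \<Rightarrow> real^'p" where
  "diag_scale al u = (\<chi> j. al j * u $ j)"

definition Uset :: "(real^'p::finite) set \<Rightarrow> real^'p \<Rightarrow> ('p \<Rightarrow> real) \<Rightarrow> (real^'p) set" where
  "Uset Th ts al = {u. ts + diag_scale al u \<in> closure Th}"

definition Vset :: "(real^'p::finite) set \<Rightarrow> real^'p \<Rightarrow> ('p \<Rightarrow> real) \<Rightarrow> real \<Rightarrow> (real^'p) set" where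
  "Vset Th ts al r = {u \<in> Uset Th ts al. norm u \<ge> r}"

definition Zfield :: "(real^'p::finite \<Rightarrow> real) \<Rightarrow> real^'p \<Rightarrow> ('p \<Rightarrow> real) \<Rightarrow> real^'p \<Rightarrow> real" where
  "Zfield G ts al u = exp (G (ts + diag_scale al u) - G ts)"

definition penalty :: "('p::finite \<Rightarrow> real) \<Rightarrow> (real \<Rightarrow> real) \<Rightarrow> real^'p \<Rightarrow> real" where
  "penalty xi p th = (\<Sum>j\<in>UNIV. xi j * p (th $ j))"

end

theory Submission
  imports Defs
begin

lemma op_set_ne: "A \<subseteq> space M \<Longrightarrow> {measure M B | B. B \<in> sets M \<and> A \<subseteq> B} \<noteq> {}"
  by blast

lemma op_bdd: "bdd_below {measure M B | B. B \<in> sets M \<and> A \<subseteq> B}"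
  by (rule bdd_belowI[of _ 0]) auto

lemma op_le_meas: "B \<in> sets M \<Longrightarrow> A \<subseteq> B \<Longrightarrow> outer_prob M A \<le> measure M B"
  unfolding outer_prob_def by (rule cInf_lower[OF _ op_bdd]) blast

lemma op_nonneg: "A \<subseteq> space M \<Longrightarrow> outer_prob M A \<ge> 0"
  unfolding outer_prob_def by (rule cInf_greatest[OF op_set_ne]) auto

lemma op_le1: "prob_space M \<Longrightarrow> A \<subseteq> space M \<Longrightarrow> outer_prob M A \<le> 1"
  using op_le_meas[of "space M" M A] prob_space.prob_space by fastforce

lemma op_mono: assumes "A \<subseteq> A'" "A' \<subseteq> space M" shows "outer_prob M A \<le> outer_prob M A'"
proof -
  have "outer_prob M A \<le> outer_prob M A'"
    unfolding outer_prob_def[of M A']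
    apply (rule cInf_greatest[OF op_set_ne[OF assms(2)]])
    using op_le_meas assms(1) by fastforce
  then show ?thesis .
qed

lemma op_union: assumes A: "A \<subseteq> space M" and A': "A' \<subseteq> space M"
  shows "outer_prob M (A \<union> A') \<le> outer_prob M A + outer_prob M A'"
proof -
  have 1: "outer_prob M (A \<union> A') - measure M B2 \<le> outer_prob M A"
    if B2: "B2 \<in> sets M" "A' \<subseteq> B2" for B2
  proof -
    have "outer_prob M (A \<union> A') - measure M B2 \<le> Inf {measure M B | B. B \<in> sets M \<and> A \<subseteq> B}"
    proof (rule cInf_greatest[OF op_set_ne[OF A]])
      fix x assume "x \<in> {measure M B | B. B \<in> sets M \<and> A \<subseteq> B}"
      then obtain B1 where B1: "B1 \<in> sets M" "A \<subseteq> B1" "x = measure M B1" by blast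
      have "outer_prob M (A \<union> A') \<le> measure M (B1 \<union> B2)"
        using B1 B2 by (intro op_le_meas) auto
      also have "\<dots> \<le> measure M B1 + measure M B2" using B1 B2 by (intro measure_Un_le) auto
      finally show "outer_prob M (A \<union> A') - measure M B2 \<le> x" using B1 by simp
    qed
    then show ?thesis unfolding outer_prob_def[of M A] .
  qed
  have "outer_prob M (A \<union> A') - outer_prob M A \<le> Inf {measure M B | B. B \<in> sets M \<and> A' \<subseteq> B}"
    apply (rule cInf_greatest[OF op_set_ne[OF A']])
    using 1 by fastforce
  then show ?thesis unfolding outer_prob_def[of M A'] by simp
qed

lemma op_UN: fixes n :: nat assumes "\<And>k. A k \<subseteq> space M"
  shows "outer_prob M (\<Union>k<n. A k) \<le> (\<Sum>k<n. outer_prob M (A k))"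
proof (induction n)
  case 0
  have "outer_prob M {} \<le> 0" using op_le_meas[of "{}" M "{}"] by simp
  then show ?case by simp
next
  case (Suc n)
  have "outer_prob M (\<Union>k<Suc n. A k) = outer_prob M ((\<Union>k<n. A k) \<union> A n)"
    by (simp add: lessThan_Suc Un_commute)
  also have "\<dots> \<le> outer_prob M (\<Union>k<n. A k) + outer_prob M (A n)"
    using assms by (intro op_union) auto
  also have "\<dots> \<le> (\<Sum>k<Suc n. outer_prob M (A k))" using Suc by simp
  finally show ?case .
qed

lemma op_null: assumes "N \<subseteq> N'" "N' \<in> sets M" "emeasure M N' = 0"
  shows "outer_prob M N \<le> 0"
  using op_le_meas[OF assms(2,1)] assms(3) by (simp add: measure_def)


lemma loc_lip:
  assumes "p differentiable (at (t::real))"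
  shows "\<exists>d>0. \<exists>Mc\<ge>0. \<forall>h. \<bar>h\<bar> < d \<longrightarrow> \<bar>p (t + h) - p t\<bar> \<le> Mc * \<bar>h\<bar>"
proof -
  obtain D where D: "(p has_real_derivative D) (at t)"
    using assms real_differentiable_def by blast
  then have "((\<lambda>y. (p y - p t) / (y - t)) \<longlongrightarrow> D) (at t)"
    using has_field_derivative_iff by blast
  then have "eventually (\<lambda>y. dist ((p y - p t) / (y - t)) D < 1) (at t)"
    by (rule tendstoD) simp
  then obtain d where d: "d > 0" and dd: "\<And>y. y \<noteq> t \<Longrightarrow> dist y t < d \<Longrightarrow> dist ((p y - p t) / (y - t)) D < 1"
    unfolding eventually_at by blast
  have "\<bar>p (t + h) - p t\<bar> \<le> (\<bar>D\<bar> + 1) * \<bar>h\<bar>" if "\<bar>h\<bar> < d" for h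
  proof (cases "h = 0")
    case False
    have "dist ((p (t+h) - p t) / h) D < 1" using dd[of "t+h"] that False by (simp add: dist_real_def)
    then have "\<bar>(p (t+h) - p t) / h\<bar> \<le> \<bar>D\<bar> + 1" by (simp add: dist_real_def)
    then show ?thesis using False by (simp add: abs_divide divide_le_eq)
  qed simp
  then show ?thesis using d by (intro exI[of _ d] conjI exI[of _ "\<bar>D\<bar> + 1"]) auto
qed

lemma pen_const:
  fixes p :: "real \<Rightarrow> real" and t c0 :: real
  assumes p_nonneg: "\<forall>x. p x \<ge> 0" and p0: "p 0 = 0" and c0: "c0 > 0"
    and A2: "\<forall>x. x \<noteq> 0 \<longrightarrow> p differentiable (at x)"
  shows "\<exists>K\<ge>0. \<forall>a xx y. xx > 0 \<longrightarrow> (t \<noteq> 0 \<longrightarrow> \<bar>a * xx\<bar> \<le> c0) \<longrightarrow> xx * (p t - p (t + a * y)) \<le> K * \<bar>y\<bar>"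
proof (cases "t = 0")
  case True
  show ?thesis
    apply (rule exI[of _ 0])
    using True p0 p_nonneg by (simp add: mult_nonneg_nonneg)
next
  case False
  obtain d Mc where d: "d > 0" "Mc \<ge> 0" and L: "\<And>h. \<bar>h\<bar> < d \<Longrightarrow> \<bar>p (t + h) - p t\<bar> \<le> Mc * \<bar>h\<bar>"
    using loc_lip[of p t] A2 False by blast
  define K where "K = c0 * (Mc + p t / d)"
  have K0: "K \<ge> 0" unfolding K_def using c0 d p_nonneg by simp
  have "xx * (p t - p (t + a * y)) \<le> K * \<bar>y\<bar>" if xx: "xx > 0" and ax: "\<bar>a * xx\<bar> \<le> c0" for a xx y
  proof (cases "\<bar>a * y\<bar> < d")
    case True
    have "xx * (p t - p (t + a * y)) \<le> xx * (Mc * \<bar>a * y\<bar>)"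
      using L[OF True] xx by (intro mult_left_mono) auto
    also have "\<dots> = Mc * (\<bar>a * xx\<bar> * \<bar>y\<bar>)" using xx by (simp add: abs_mult)
    also have "\<dots> \<le> Mc * (c0 * \<bar>y\<bar>)" using ax d by (intro mult_left_mono mult_right_mono) auto
    also have "\<dots> \<le> K * \<bar>y\<bar>" unfolding K_def using c0 d p_nonneg
      by (simp add: algebra_simps mult_nonneg_nonneg)
    finally show ?thesis .
  next
    case False
    have "xx * (p t - p (t + a * y)) \<le> xx * p t" using xx p_nonneg by (simp add: mult_left_mono)
    also have "\<dots> \<le> xx * p t * (\<bar>a * y\<bar> / d)"
    proof -
      have "1 \<le> \<bar>a * y\<bar> / d" using False d by (simp add: le_divide_eq)
      then have "xx * p t * 1 \<le> xx * p t * (\<bar>a * y\<bar> / d)"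
        using xx p_nonneg by (intro mult_left_mono) (auto simp: mult_nonneg_nonneg)
      then show ?thesis by simp
    qed
    also have "\<dots> = (p t / d) * (\<bar>a * xx\<bar> * \<bar>y\<bar>)" using xx by (simp add: abs_mult)
    also have "\<dots> \<le> (p t / d) * (c0 * \<bar>y\<bar>)" using ax d p_nonneg by (intro mult_left_mono mult_right_mono) auto
    also have "\<dots> \<le> K * \<bar>y\<bar>" unfolding K_def using c0 d p_nonneg
      by (simp add: algebra_simps mult_nonneg_nonneg)
    finally show ?thesis .
  qed
  then show ?thesis using K0 False by blast
qed


lemma zpen_bound:
  fixes ts :: "real^'p::finite"
  assumes K: "\<forall>j. \<forall>a xx y. xx > 0 \<longrightarrow> (ts$j \<noteq> 0 \<longrightarrow> \<bar>a * xx\<bar> \<le> c0) \<longrightarrow> xx * (p (ts$j) - p (ts$j + a * y)) \<le> Kf j * \<bar>y\<bar>"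
    and K0: "\<forall>j. Kf j \<ge> 0"
    and xi: "\<forall>j. xi j > 0" and c: "\<forall>j. ts$j \<noteq> 0 \<longrightarrow> \<bar>al j * xi j\<bar> \<le> c0"
  shows "Zfield (\<lambda>th. G th - penalty xi p th) ts al u \<le> Zfield G ts al u * exp ((\<Sum>j\<in>UNIV. Kf j) * norm u)"
proof -
  let ?x = "ts + diag_scale al u"
  have "penalty xi p ts - penalty xi p ?x = (\<Sum>j\<in>UNIV. xi j * (p (ts$j) - p (ts$j + al j * u$j)))"
    unfolding penalty_def diag_scale_def by (simp add: sum_subtractf[symmetric] algebra_simps)
  also have "\<dots> \<le> (\<Sum>j\<in>UNIV. Kf j * \<bar>u$j\<bar>)"
    apply (rule sum_mono)
    subgoal for j using K[rule_format, of "xi j" j "al j" "u$j"] xi c by auto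
    done
  also have "\<dots> \<le> (\<Sum>j\<in>UNIV. Kf j * norm u)"
    apply (rule sum_mono)
    using K0 component_le_norm_cart by (metis mult_left_mono)
  also have "\<dots> = (\<Sum>j\<in>UNIV. Kf j) * norm u" by (simp add: sum_distrib_right)
  finally have le: "penalty xi p ts - penalty xi p ?x \<le> (\<Sum>j\<in>UNIV. Kf j) * norm u" .
  have "Zfield (\<lambda>th. G th - penalty xi p th) ts al u = exp ((G ?x - G ts) + (penalty xi p ts - penalty xi p ?x))"
    unfolding Zfield_def by (simp add: algebra_simps)
  also have "\<dots> \<le> exp ((G ?x - G ts) + (\<Sum>j\<in>UNIV. Kf j) * norm u)" using le by simp
  also have "\<dots> = Zfield G ts al u * exp ((\<Sum>j\<in>UNIV. Kf j) * norm u)"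
    unfolding Zfield_def by (simp add: exp_add)
  finally show ?thesis .
qed

lemma shell:
  fixes r s :: real and n :: nat
  assumes "r \<le> s" "s < 2^n * r"
  shows "\<exists>k<n. 2^k * r \<le> s \<and> s < 2^(Suc k) * r"
  using assms
proof (induction n)
  case 0 then show ?case by simp
next
  case (Suc n)
  show ?case
  proof (cases "s < 2^n * r")
    case True then show ?thesis using Suc by (meson less_Suc_eq)
  next
    case False then show ?thesis using Suc by (intro exI[of _ n]) auto
  qed
qed

lemma R0_ex:
  fixes K e e' :: real
  assumes "K \<ge> 0" "0 < e" "e < e'" "e' < 1"
  shows "\<exists>R0\<ge>1. \<forall>s\<ge>R0. s powr (2 - e') + ln 2 + 2 * K * s \<le> s powr (2 - e)"
proof -
  define d where "d = e' - e"
  define R0 where "R0 = max 1 ((2 + 2*K) powr (1/d))"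
  have d0: "d > 0" using assms d_def by simp
  have "s powr (2 - e') + ln 2 + 2 * K * s \<le> s powr (2 - e)" if s: "s \<ge> R0" for s
  proof -
    have s1: "s \<ge> 1" using s R0_def by simp
    have "s powr d \<ge> ((2 + 2*K) powr (1/d)) powr d"
      using s R0_def d0 assms by (intro powr_mono2) auto
    also have "((2 + 2*K) powr (1/d)) powr d = 2 + 2*K" using d0 assms by (simp add: powr_powr)
    finally have sd: "s powr d \<ge> 2 + 2*K" .
    have "s powr 1 \<le> s powr (2 - e')" using s1 assms by (intro powr_mono) auto
    then have ps: "s powr (2 - e') \<ge> s" using s1 by simp
    have eq: "s powr (2 - e) = s powr (2 - e') * s powr d" using s1 d_def by (simp add: powr_add[symmetric])
    have "s powr (2 - e') * (s powr d - 1) \<ge> s * (1 + 2*K)"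
      using ps sd s1 assms by (intro mult_mono) auto
    moreover have "ln 2 \<le> (1::real)" using ln_2_less_1 by simp
    ultimately show ?thesis unfolding eq using s1 by (simp add: algebra_simps)
  qed
  moreover have "R0 \<ge> 1" unfolding R0_def by simp
  ultimately show ?thesis by blast
qed

lemma Uset_bdd:
  fixes Th :: "(real^'p::finite) set"
  assumes "bounded Th" "ts \<in> Th" "\<forall>j. al j \<noteq> 0"
  shows "\<exists>B. \<forall>u\<in>Uset Th ts al. norm u \<le> B"
proof -
  obtain B where B: "\<forall>x\<in>closure Th. norm x \<le> B" using assms(1) bounded_closure bounded_iff by blast
  have "norm u \<le> (\<Sum>j\<in>UNIV. 2 * B / \<bar>al j\<bar>)" if u: "u \<in> Uset Th ts al" for u
  proof -
    let ?x = "ts + diag_scale al u"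
    have x: "norm ?x \<le> B" using u B unfolding Uset_def by auto
    have t: "norm ts \<le> B" using B assms(2) closure_subset by blast
    have "\<bar>u$j\<bar> \<le> 2 * B / \<bar>al j\<bar>" for j
    proof -
      have "u$j = (?x$j - ts$j) / al j" using assms(3) unfolding diag_scale_def by simp
      moreover have "\<bar>?x$j - ts$j\<bar> \<le> 2 * B"
        using component_le_norm_cart[of ?x j] component_le_norm_cart[of ts j] x t by linarith
      ultimately show ?thesis using assms(3) by (simp add: abs_divide divide_right_mono)
    qed
    then have "(\<Sum>j\<in>UNIV. \<bar>u$j\<bar>) \<le> (\<Sum>j\<in>UNIV. 2 * B / \<bar>al j\<bar>)" by (intro sum_mono)
    then show ?thesis using norm_le_l1_cart[of u] by linarith
  qed
  then show ?thesis by blast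
qed


lemma pow2_powr: "((2::real)^k) powr L = (2 powr L)^k"
  by (induction k) (auto simp: powr_mult)

theorem theorem1:
  fixes M :: "'w measure"
    and Th :: "(real^'p::finite) set"
    and ts :: "real^'p"
    and TT :: "real set"
    and H :: "real \<Rightarrow> 'w \<Rightarrow> real^'p \<Rightarrow> real"
    and xi :: "real \<Rightarrow> 'w \<Rightarrow> 'p \<Rightarrow> real"
    and p :: "real \<Rightarrow> real"
    and al :: "real \<Rightarrow> 'p \<Rightarrow> real"
    and L c0 :: real
  assumes M: "prob_space M"
    and Th_open: "open Th" and Th_bdd: "bounded Th" and ts_in: "ts \<in> Th"
    and TT_nonneg: "TT \<subseteq> {0..}" and TT_unbdd: "\<forall>x. \<exists>T\<in>TT. T > x"
    and H_cont: "\<forall>T\<in>TT. \<forall>\<omega>\<in>space M. continuous_on (closure Th) (H T \<omega>)"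
    and xi_pos: "\<forall>T\<in>TT. \<forall>\<omega>\<in>space M. \<forall>j. xi T \<omega> j > 0"
    and p_nonneg: "\<forall>x. p x \<ge> 0" and p0: "p 0 = 0"
    and al_nz: "\<forall>T\<in>TT. \<forall>j. al T j \<noteq> 0"
    and al_lim: "\<forall>e>0. \<exists>T0. \<forall>T\<in>TT. T \<ge> T0 \<longrightarrow> onorm (diag_scale (al T)) < e"
    and L_pos: "L > 0" and c0_pos: "c0 > 0"
    and A1: "\<exists>CL>0. \<exists>eL. 0 < eL \<and> eL < 1 \<and>
              (\<forall>r>0. \<forall>T\<in>TT.
                 outer_prob M {\<omega> \<in> space M.
                   (SUP u\<in>Vset Th ts (al T) r. ereal (Zfield (H T \<omega>) ts (al T) u))
                     \<ge> ereal (exp (- (r powr (2 - eL))))}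
                 \<le> CL / r powr L)"
    and A2: "\<forall>x. x \<noteq> 0 \<longrightarrow> p differentiable (at x)"
    and A3: "\<exists>e>0. bdd_above (p ` {-e<..<e})"
    and A4: "\<forall>j. ts $ j \<noteq> 0 \<longrightarrow> (AE \<omega> in M. \<forall>T\<in>TT. \<bar>al T j * xi T \<omega> j\<bar> \<le> c0)"
  shows "\<exists>CL'>0. \<exists>eL'. 0 < eL' \<and> eL' < 1 \<and>
              (\<forall>r>0. \<forall>T\<in>TT.
                 outer_prob M {\<omega> \<in> space M.
                   (SUP u\<in>Vset Th ts (al T) r.
                      ereal (Zfield (\<lambda>th. H T \<omega> th - penalty (xi T \<omega>) p th) ts (al T) u))
                     \<ge> ereal (exp (- (r powr (2 - eL'))))}
                 \<le> CL' / r powr L)"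
proof -
  obtain CL eL where CL: "CL > 0" and eL: "0 < eL" "eL < 1" and
    A1': "\<And>r T. r > 0 \<Longrightarrow> T \<in> TT \<Longrightarrow> outer_prob M {\<omega> \<in> space M.
                   (SUP u\<in>Vset Th ts (al T) r. ereal (Zfield (H T \<omega>) ts (al T) u))
                     \<ge> ereal (exp (- (r powr (2 - eL))))} \<le> CL / r powr L"
    using A1 by blast
  have "\<forall>j. \<exists>K\<ge>0. \<forall>a xx y. xx > 0 \<longrightarrow> (ts$j \<noteq> 0 \<longrightarrow> \<bar>a * xx\<bar> \<le> c0) \<longrightarrow> xx * (p (ts$j) - p (ts$j + a * y)) \<le> K * \<bar>y\<bar>"
    using pen_const[OF p_nonneg p0 c0_pos A2] by blast
  then obtain Kf where Kf0: "\<forall>j. Kf j \<ge> 0" and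
    Kf: "\<forall>j. \<forall>a xx y. xx > 0 \<longrightarrow> (ts$j \<noteq> 0 \<longrightarrow> \<bar>a * xx\<bar> \<le> c0) \<longrightarrow> xx * (p (ts$j) - p (ts$j + a * y)) \<le> Kf j * \<bar>y\<bar>"
    by metis
  define K where "K = (\<Sum>j\<in>UNIV. Kf j)"
  have K0: "K \<ge> 0" unfolding K_def using Kf0 by (simp add: sum_nonneg)
  define e' where "e' = (1 + eL) / 2"
  have e': "0 < e'" "eL < e'" "e' < 1" using eL unfolding e'_def by auto
  obtain R0 where R0: "R0 \<ge> 1" and R0': "\<And>s. s \<ge> R0 \<Longrightarrow> s powr (2 - e') + ln 2 + 2 * K * s \<le> s powr (2 - eL)"
    using R0_ex[OF K0 eL(1) e'(2) e'(3)] by blast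
  define q where "q = 1 / 2 powr L"
  have q: "0 < q" "q < 1" unfolding q_def using L_pos by auto
  define CL' where "CL' = CL / (1 - q) + R0 powr L"
  have CL'0: "CL' > 0" unfolding CL'_def using CL q R0 by (simp add: add_pos_pos)
  have "AE \<omega> in M. \<forall>j. ts $ j \<noteq> 0 \<longrightarrow> (\<forall>T\<in>TT. \<bar>al T j * xi T \<omega> j\<bar> \<le> c0)"
  proof (rule eventually_all_finite)
    fix j show "AE \<omega> in M. ts $ j \<noteq> 0 \<longrightarrow> (\<forall>T\<in>TT. \<bar>al T j * xi T \<omega> j\<bar> \<le> c0)"
      using A4 by (cases "ts $ j = 0") auto
  qed
  then obtain N where N: "{\<omega> \<in> space M. \<not> (\<forall>j. ts $ j \<noteq> 0 \<longrightarrow> (\<forall>T\<in>TT. \<bar>al T j * xi T \<omega> j\<bar> \<le> c0))} \<subseteq> N"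
    "emeasure M N = 0" "N \<in> sets M"
    by (rule AE_E)
  have main: "outer_prob M {\<omega> \<in> space M.
                   (SUP u\<in>Vset Th ts (al T) r.
                      ereal (Zfield (\<lambda>th. H T \<omega> th - penalty (xi T \<omega>) p th) ts (al T) u))
                     \<ge> ereal (exp (- (r powr (2 - e'))))}
                 \<le> CL' / r powr L" if r: "r > 0" and T: "T \<in> TT" for r T
  proof -
    define E where "E = {\<omega> \<in> space M.
                   (SUP u\<in>Vset Th ts (al T) r.
                      ereal (Zfield (\<lambda>th. H T \<omega> th - penalty (xi T \<omega>) p th) ts (al T) u))
                     \<ge> ereal (exp (- (r powr (2 - e'))))}"
    have Esub: "E \<subseteq> space M" unfolding E_def by auto
    show ?thesis
    proof (cases "r < R0")
      case True
      have "r powr L \<le> R0 powr L" using True r L_pos by (intro powr_mono2) auto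
      then have "1 \<le> R0 powr L / r powr L" using r by simp
      also have "\<dots> \<le> CL' / r powr L" unfolding CL'_def using CL q r
        by (intro divide_right_mono) auto
      finally show ?thesis using op_le1[OF M Esub] unfolding E_def by linarith
    next
      case False
      then have rR: "r \<ge> R0" by simp
      obtain B where B: "\<forall>u\<in>Uset Th ts (al T). norm u \<le> B"
        using Uset_bdd[OF Th_bdd ts_in] al_nz T by blast
      obtain n :: nat where n: "B / r < 2 ^ n" using real_arch_pow[of 2 "B / r"] by auto
      have Bn: "B < 2^n * r" using n r by (simp add: divide_less_eq)
      define A where "A k = {\<omega> \<in> space M.
                   (SUP u\<in>Vset Th ts (al T) (2^k * r). ereal (Zfield (H T \<omega>) ts (al T) u))
                     \<ge> ereal (exp (- ((2^k * r) powr (2 - eL))))}" for k :: nat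
      have incl: "E \<subseteq> (N \<inter> space M) \<union> (\<Union>k<n. A k)"
      proof
        fix \<omega> assume w: "\<omega> \<in> E"
        then have ws: "\<omega> \<in> space M" unfolding E_def by auto
        show "\<omega> \<in> (N \<inter> space M) \<union> (\<Union>k<n. A k)"
        proof (cases "\<omega> \<in> N")
          case True then show ?thesis using ws by auto
        next
          case False
          then have good: "\<forall>j. ts $ j \<noteq> 0 \<longrightarrow> \<bar>al T j * xi T \<omega> j\<bar> \<le> c0"
            using N(1) ws T by auto
          define c where "c = exp (- (r powr (2 - e')))"
          have c0': "c > 0" unfolding c_def by simp
          have "ereal (c / 2) < ereal c" using c0' by simp
          also have "ereal c \<le> (SUP u\<in>Vset Th ts (al T) r.
                      ereal (Zfield (\<lambda>th. H T \<omega> th - penalty (xi T \<omega>) p th) ts (al T) u))"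
            using w unfolding E_def c_def by auto
          finally obtain u where u: "u \<in> Vset Th ts (al T) r"
            and cu: "c / 2 < Zfield (\<lambda>th. H T \<omega> th - penalty (xi T \<omega>) p th) ts (al T) u"
            unfolding less_SUP_iff by auto
          have zb: "Zfield (\<lambda>th. H T \<omega> th - penalty (xi T \<omega>) p th) ts (al T) u
                \<le> Zfield (H T \<omega>) ts (al T) u * exp (K * norm u)"
            unfolding K_def
            by (rule zpen_bound[OF Kf Kf0]) (use xi_pos T ws good in auto)
          define s where "s = norm u"
          have uU: "u \<in> Uset Th ts (al T)" and rs: "r \<le> s" using u unfolding Vset_def s_def by auto
          have sB: "s < 2^n * r" using B uU Bn unfolding s_def by fastforce
          obtain k where k: "k < n" "2^k * r \<le> s" "s < 2^(Suc k) * r" using shell[OF rs sB] by blast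
          define sk where "sk = 2^k * r"
          have rsk: "r \<le> sk" unfolding sk_def using r by simp
          have ssk: "s < 2 * sk" using k(3) unfolding sk_def by simp
          have skR: "sk \<ge> R0" using rsk rR by simp
          have "r powr (2 - e') \<le> sk powr (2 - e')" using rsk r e' by (intro powr_mono2) auto
          moreover have "K * s \<le> 2 * K * sk"
          proof -
            have "K * s \<le> K * (2 * sk)" using K0 ssk by (intro mult_left_mono) auto
            then show ?thesis by (simp add: algebra_simps)
          qed
          ultimately have expo: "r powr (2 - e') + ln 2 + K * s \<le> sk powr (2 - eL)"
            using R0'[OF skR] by linarith
          have "exp (- (sk powr (2 - eL))) \<le> exp (- (r powr (2 - e') + ln 2 + K * s))"
            using expo by simp
          also have "\<dots> = c / 2 * exp (- (K * s))" unfolding c_def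
            by (simp add: exp_add exp_diff exp_minus field_simps)
          also have "\<dots> \<le> Zfield (H T \<omega>) ts (al T) u"
          proof -
            have "c / 2 < Zfield (H T \<omega>) ts (al T) u * exp (K * s)" using cu zb unfolding s_def by linarith
            then have "c / 2 * exp (- (K * s)) < (Zfield (H T \<omega>) ts (al T) u * exp (K * s)) * exp (- (K * s))"
              by (rule mult_strict_right_mono) simp
            moreover have "exp (K * s) * exp (- (K * s)) = 1" by (simp add: exp_add[symmetric])
            ultimately have "c / 2 * exp (- (K * s)) < Zfield (H T \<omega>) ts (al T) u"
              by (metis mult.assoc mult.right_neutral)
            then show ?thesis by simp
          qed
          finally have Zu: "exp (- (sk powr (2 - eL))) \<le> Zfield (H T \<omega>) ts (al T) u" .
          have uV: "u \<in> Vset Th ts (al T) sk" using uU k(2) unfolding Vset_def sk_def s_def by auto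
          have "ereal (exp (- (sk powr (2 - eL)))) \<le> ereal (Zfield (H T \<omega>) ts (al T) u)" using Zu by simp
          also have "\<dots> \<le> (SUP u\<in>Vset Th ts (al T) sk. ereal (Zfield (H T \<omega>) ts (al T) u))"
            using uV by (rule SUP_upper)
          finally have "\<omega> \<in> A k" unfolding A_def sk_def using ws by auto
          then show ?thesis using k(1) by auto
        qed
      qed
      have Asub: "\<And>k. A k \<subseteq> space M" unfolding A_def by auto
      have "outer_prob M E \<le> outer_prob M ((N \<inter> space M) \<union> (\<Union>k<n. A k))"
        using incl Asub by (intro op_mono) auto
      also have "\<dots> \<le> outer_prob M (N \<inter> space M) + outer_prob M (\<Union>k<n. A k)"
        using Asub by (intro op_union) auto
      also have "\<dots> \<le> 0 + (\<Sum>k<n. outer_prob M (A k))"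
        using op_null[of "N \<inter> space M" N M] N op_UN[of A M n] Asub by (intro add_mono) auto
      also have "\<dots> \<le> (\<Sum>k<n. CL / (2^k * r) powr L)"
        unfolding A_def using A1' r T by (simp add: sum_mono)
      also have "\<dots> = (\<Sum>k<n. CL / r powr L * q^k)"
        by (rule sum.cong) (use r in \<open>auto simp: powr_mult pow2_powr q_def power_one_over\<close>)
      also have "\<dots> = CL / r powr L * (\<Sum>k<n. q^k)"
        by (simp only: sum_distrib_left)
      also have "\<dots> = CL / r powr L * ((1 - q^n) / (1 - q))"
        using q by (simp add: sum_gp_strict)
      also have "\<dots> \<le> CL / r powr L * (1 / (1 - q))"
        using q CL r by (intro mult_left_mono divide_right_mono) auto
      also have "\<dots> = (CL / (1 - q)) / r powr L" by simp
      also have "\<dots> \<le> CL' / r powr L" unfolding CL'_def using r by (intro divide_right_mono) auto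
      finally show ?thesis unfolding E_def .
    qed
  qed
  show ?thesis using CL'0 e' main by blast
qed

end
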